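(* Let $\vec a\in\mathbb R^4\setminus\{0\}$, let $V\in\mathfrak X(\mathbb S^3)$ be the proper conformal vector field $V(p)=\vec a-\langle\vec a,p\rangle p$, let $q\neq0$, and let $\gamma\colon I\to\mathbb S^3$ be a curve parametrized by arc-length which is a conformal trajectory of $V$. Then there exist $a_1,a_2\in\mathbb R$ such that $$\langle\gamma(s),\vec a\rangle=a_1\cos s+a_2\sin s\quad\text{for all }s\in I.$$ If $\gamma$ is a geodesic, then $\gamma(s)=\cos(s)\,\vec v+\sin(s)\,\vec w$ for orthonormal vectors $\vec v,\vec w\in\mathbb R^4$ with $\vec a\in\operatorname{span}\{\vec v,\vec w\}$; that is, $\gamma$ is (an arc of) the great circle obtained by intersecting $\mathbb S^3$ with a $2$-plane through the origin containing $\vec a$. If $\gamma$ is not a geodesic, then its curvature is constant, $\kappa=|q|\sqrt{|\vec a|^2-(a_1^2+a_2^2)}$, and its torsion is $\tau(s)=-q\,(a_1\sin s-a_2\cos s)$.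
   Context: $\mathbb S^3=\{p\in\mathbb R^4:|p|=1\}$ with the metric induced by the Euclidean inner product $\langle\cdot,\cdot\rangle$ of $\mathbb R^4$; its Levi-Civita connection is $\nabla$, so for a unit-speed curve $\nabla_{\gamma'}\gamma'=\gamma''+\gamma$. The cross product of $u,v\in T_p\mathbb S^3$ is the unique $u\times v\in T_p\mathbb S^3$ with $\langle u\times v,w\rangle=\det(u,v,w,p)$ for all $w\in T_p\mathbb S^3$. For a fixed real $q\neq0$, a conformal trajectory of $V$ is a regular curve with $\nabla_{\gamma'}\gamma'=q\,V\times\gamma'$. Frenet frame of a non-geodesic unit-speed curve: $T=\gamma'$, $\nabla_TT=\kappa N$ with $\kappa>0$, $B=T\times N$, $\nabla_TN=-\kappa T+\tau B$, $\nabla_TB=-\tau N$; $\kappa$ is the curvature, $\tau$ the torsion. *)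

theory Defs
  imports "HOL-Analysis.Analysis"
begin

text \<open>Cross product in T_p S^3: the vector whose i-th component is det(u,v,e_i,p).
  Hence its inner product with w equals det(u,v,w,p) for every w in R^4, and it is
  orthogonal to p, so it is the unique tangent vector with that property.\<close>
definition sphere_cross :: "real^4 \<Rightarrow> real^4 \<Rightarrow> real^4 \<Rightarrow> real^4" where
  "sphere_cross p u v =
     (\<chi> i. det ((\<chi> j. if j = 1 then u else if j = 2 then v
                      else if j = 3 then axis i 1 else p) :: real^4^4))"

definition confV :: "real^4 \<Rightarrow> real^4 \<Rightarrow> real^4" where
  "confV a p = a - (a \<bullet> p) *\<^sub>R p"

definition vel :: "(real \<Rightarrow> real^4) \<Rightarrow> real \<Rightarrow> real^4" where
  "vel g s = vector_derivative g (at s)"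

definition cov_deriv :: "(real \<Rightarrow> real^4) \<Rightarrow> (real \<Rightarrow> real^4) \<Rightarrow> real \<Rightarrow> real^4" where
  "cov_deriv g X s =
     vector_derivative X (at s) - (vector_derivative X (at s) \<bullet> g s) *\<^sub>R g s"

definition curv :: "(real \<Rightarrow> real^4) \<Rightarrow> real \<Rightarrow> real" where
  "curv g s = norm (cov_deriv g (vel g) s)"

definition frenetN :: "(real \<Rightarrow> real^4) \<Rightarrow> real \<Rightarrow> real^4" where
  "frenetN g s = (1 / curv g s) *\<^sub>R cov_deriv g (vel g) s"

definition frenetB :: "(real \<Rightarrow> real^4) \<Rightarrow> real \<Rightarrow> real^4" where
  "frenetB g s = sphere_cross (g s) (vel g s) (frenetN g s)"

text \<open>Torsion: the B-component of nabla_T N (Frenet equation nabla_T N = -kappa T + tau B).\<close>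
definition tors :: "(real \<Rightarrow> real^4) \<Rightarrow> real \<Rightarrow> real" where
  "tors g s = cov_deriv g (frenetN g) s \<bullet> frenetB g s"

end

theory Submission imports Defs begin
lemma det4: "det (A::'a::comm_ring_1^4^4) = A$1$1 * A$2$2 * A$3$3 * A$4$4 - A$1$1 * A$2$2 * A$3$4 * A$4$3 - A$1$1 * A$2$3 * A$3$2 * A$4$4 + A$1$1 * A$2$3 * A$3$4 * A$4$2 + A$1$1 * A$2$4 * A$3$2 * A$4$3 - A$1$1 * A$2$4 * A$3$3 * A$4$2 - A$1$2 * A$2$1 * A$3$3 * A$4$4 + A$1$2 * A$2$1 * A$3$4 * A$4$3 + A$1$2 * A$2$3 * A$3$1 * A$4$4 - A$1$2 * A$2$3 * A$3$4 * A$4$1 - A$1$2 * A$2$4 * A$3$1 * A$4$3 + A$1$2 * A$2$4 * A$3$3 * A$4$1 + A$1$3 * A$2$1 * A$3$2 * A$4$4 - A$1$3 * A$2$1 * A$3$4 * A$4$2 - A$1$3 * A$2$2 * A$3$1 * A$4$4 + A$1$3 * A$2$2 * A$3$4 * A$4$1 + A$1$3 * A$2$4 * A$3$1 * A$4$2 - A$1$3 * A$2$4 * A$3$2 * A$4$1 - A$1$4 * A$2$1 * A$3$2 * A$4$3 + A$1$4 * A$2$1 * A$3$3 * A$4$2 + A$1$4 * A$2$2 * A$3$1 * A$4$3 - A$1$4 * A$2$2 * A$3$3 * A$4$1 - A$1$4 * A$2$3 * A$3$1 * A$4$2 + A$1$4 * A$2$3 * A$3$2 * A$4$1"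
proof -
  have f1: "finite {2::4, 3, 4}" "1 \<notin> {2::4, 3, 4}" by auto
  have f2: "finite {3::4, 4}" "2 \<notin> {3::4, 4}" by auto
  have f3: "finite {4::4}" "3 \<notin> {4::4}" by auto
  show ?thesis
    unfolding det_def UNIV_4
    unfolding sum_over_permutations_insert[OF f1]
    unfolding sum_over_permutations_insert[OF f2]
    unfolding sum_over_permutations_insert[OF f3]
    unfolding permutes_sing
    by (simp add: sign_swap_id permutation_swap_id sign_compose permutation_compose swap_id_eq algebra_simps)
qed


lemma sc1: "sphere_cross p u v $ 1 = (u$2 * v$3 * p$4 + u$3 * v$4 * p$2 + u$4 * v$2 * p$3 - u$2 * v$4 * p$3 - u$3 * v$2 * p$4 - u$4 * v$3 * p$2)"
  unfolding sphere_cross_def det4 by (simp add: axis_def algebra_simps)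
lemma sc2: "sphere_cross p u v $ 2 = - (u$1 * v$3 * p$4 + u$3 * v$4 * p$1 + u$4 * v$1 * p$3 - u$1 * v$4 * p$3 - u$3 * v$1 * p$4 - u$4 * v$3 * p$1)"
  unfolding sphere_cross_def det4 by (simp add: axis_def algebra_simps)
lemma sc3: "sphere_cross p u v $ 3 = (u$1 * v$2 * p$4 + u$2 * v$4 * p$1 + u$4 * v$1 * p$2 - u$1 * v$4 * p$2 - u$2 * v$1 * p$4 - u$4 * v$2 * p$1)"
  unfolding sphere_cross_def det4 by (simp add: axis_def algebra_simps)
lemma sc4: "sphere_cross p u v $ 4 = - (u$1 * v$2 * p$3 + u$2 * v$3 * p$1 + u$3 * v$1 * p$2 - u$1 * v$3 * p$2 - u$2 * v$1 * p$3 - u$3 * v$2 * p$1)"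
  unfolding sphere_cross_def det4 by (simp add: axis_def algebra_simps)

lemma inner4: "(x::real^4) \<bullet> y = x$1*y$1 + x$2*y$2 + x$3*y$3 + x$4*y$4"
  by (simp add: inner_vec_def sum_4)

lemmas scc = sc1 sc2 sc3 sc4

lemma gram: "sphere_cross p x y \<bullet> sphere_cross p' x' y' =
  (x\<bullet>x')*(y\<bullet>y')*(p\<bullet>p') + (x\<bullet>y')*(y\<bullet>p')*(p\<bullet>x') + (x\<bullet>p')*(y\<bullet>x')*(p\<bullet>y')
  - (x\<bullet>x')*(y\<bullet>p')*(p\<bullet>y') - (x\<bullet>y')*(y\<bullet>x')*(p\<bullet>p') - (x\<bullet>p')*(y\<bullet>y')*(p\<bullet>x')"
  unfolding inner4 scc by algebra

lemma sc_p: "sphere_cross p u v \<bullet> p = 0"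
  unfolding inner4 scc by algebra
lemma sc_u: "sphere_cross p u v \<bullet> u = 0"
  unfolding inner4 scc by algebra
lemma sc_v: "sphere_cross p u v \<bullet> v = 0"
  unfolding inner4 scc by algebra

lemma sc_confV: "sphere_cross p (confV a p) v = sphere_cross p a v"
  by (simp add: confV_def vec_eq_iff forall_4 scc inner4 algebra_simps)

lemma sc_pp: "sphere_cross p u p = 0"
  by (simp add: vec_eq_iff forall_4 scc algebra_simps)

lemma sc_diff_v: "sphere_cross p u (c *\<^sub>R x - y) = c *\<^sub>R sphere_cross p u x - sphere_cross p u y"
  by (simp add: vec_eq_iff forall_4 scc algebra_simps)

lemma sc_scale_v: "sphere_cross p u (c *\<^sub>R x) = c *\<^sub>R sphere_cross p u x"
  by (simp add: vec_eq_iff forall_4 scc algebra_simps)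

lemma sc_bilinear: "bounded_bilinear (\<lambda>p v. sphere_cross p a v)"
proof -
  have "bilinear (\<lambda>p v. sphere_cross p a v)"
    unfolding bilinear_def
    by (auto intro!: linearI simp: vec_eq_iff forall_4 scc algebra_simps)
  then show ?thesis by (simp add: bilinear_conv_bounded_bilinear)
qed
lemma ode_cos_sin:
  fixes f f' :: "real \<Rightarrow> real"
  assumes I: "is_interval I" and s0: "s0 \<in> I"
    and d1: "\<And>t. t \<in> I \<Longrightarrow> (f has_real_derivative f' t) (at t)"
    and d2: "\<And>t. t \<in> I \<Longrightarrow> (f' has_real_derivative - f t) (at t)"
  defines "A \<equiv> f s0 * cos s0 - f' s0 * sin s0" and "B \<equiv> f s0 * sin s0 + f' s0 * cos s0"
  shows "\<forall>t\<in>I. f t = A * cos t + B * sin t \<and> f' t = - A * sin t + B * cos t"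
proof -
  define h where "h t = f t - (A * cos t + B * sin t)" for t
  define k where "k t = f' t - (- A * sin t + B * cos t)" for t
  have dh: "(h has_real_derivative k t) (at t)" if "t \<in> I" for t
    unfolding h_def k_def using d1[OF that]
    by (auto intro!: derivative_eq_intros)
  have dk: "(k has_real_derivative - h t) (at t)" if "t \<in> I" for t
    unfolding h_def k_def using d2[OF that]
    by (auto intro!: derivative_eq_intros simp: algebra_simps)
  have dE: "((\<lambda>t. h t ^ 2 + k t ^ 2) has_real_derivative 0) (at t within I)" if "t \<in> I" for t
  proof -
    have "((\<lambda>t. h t ^ 2 + k t ^ 2) has_real_derivative (2 * h t * k t + 2 * k t * (- h t))) (at t)"
      using dh[OF that] dk[OF that] by (auto intro!: derivative_eq_intros)
    then show ?thesis by (simp add: has_field_derivative_at_within)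
  qed
  have cvx: "convex I" using I by (simp add: is_interval_convex)
  obtain c where c: "\<forall>t\<in>I. h t ^ 2 + k t ^ 2 = c"
    using has_field_derivative_zero_constant[OF cvx dE] by blast
  have h0: "h s0 = 0"
    unfolding h_def A_def B_def
    by (simp add: algebra_simps) (metis sin_cos_squared_add2 mult.commute mult.left_commute distrib_left mult_1_right power2_eq_square)
  have k0: "k s0 = 0"
    unfolding k_def A_def B_def
    by (simp add: algebra_simps) (metis sin_cos_squared_add2 mult.commute mult.left_commute distrib_left mult_1_right power2_eq_square)
  have "c = 0" using c s0 h0 k0 by force
  show ?thesis
  proof
    fix t assume t: "t \<in> I"
    have "h t ^ 2 + k t ^ 2 = 0" using c t \<open>c = 0\<close> by simp
    then have "h t = 0" "k t = 0" by (simp_all add: sum_power2_eq_zero_iff)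
    then show "f t = A * cos t + B * sin t \<and> f' t = - A * sin t + B * cos t"
      unfolding h_def k_def by simp
  qed
qed

lemma dinner:
  fixes f h :: "real \<Rightarrow> real^4"
  assumes "(f has_vector_derivative f') (at t)" "(h has_vector_derivative h') (at t)"
  shows "((\<lambda>x. f x \<bullet> h x) has_real_derivative (f t \<bullet> h' + f' \<bullet> h t)) (at t)"
  using bounded_bilinear.has_vector_derivative[OF bounded_bilinear_inner assms]
  by (simp add: has_real_derivative_iff_has_vector_derivative)

lemma const_deriv:
  fixes F :: "real \<Rightarrow> real"
  assumes "open I" "t \<in> I" "\<And>x. x \<in> I \<Longrightarrow> F x = c" "(F has_real_derivative D) (at t)"
  shows "D = 0"
proof -
  have "((\<lambda>_. c) has_real_derivative 0) (at t)" by simp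
  then have "(F has_real_derivative 0) (at t)"
    by (rule has_field_derivative_transform_within_open[OF _ assms(1,2)]) (simp add: assms(3))
  then show ?thesis using assms(4) DERIV_unique by blast
qed

lemma comp_deriv:
  fixes f :: "real \<Rightarrow> real^4"
  assumes "(f has_vector_derivative f') (at t)"
  shows "((\<lambda>x. f x $ k) has_real_derivative f' $ k) (at t)"
  using bounded_linear.has_vector_derivative[OF bounded_linear_vec_nth assms]
  by (simp add: has_real_derivative_iff_has_vector_derivative)

theorem theorem2:
  fixes a :: "real^4" and q :: real and I :: "real set" and g :: "real \<Rightarrow> real^4"
  assumes a_nz: "a \<noteq> 0"
    and q_nz: "q \<noteq> 0"
    and I_open: "open I" and I_int: "is_interval I" and I_ne: "I \<noteq> {}"
    and on_sphere: "\<forall>s\<in>I. norm (g s) = 1"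
    and smooth1: "\<forall>s\<in>I. g differentiable (at s)"
    and smooth2: "\<forall>s\<in>I. vel g differentiable (at s)"
    and smooth3: "\<forall>s\<in>I. (\<lambda>t. vector_derivative (vel g) (at t)) differentiable (at s)"
    and unit_speed: "\<forall>s\<in>I. norm (vel g s) = 1"
    and conformal: "\<forall>s\<in>I. cov_deriv g (vel g) s = q *\<^sub>R sphere_cross (g s) (confV a (g s)) (vel g s)"
  shows "\<exists>a1 a2 :: real.
     (\<forall>s\<in>I. g s \<bullet> a = a1 * cos s + a2 * sin s) \<and>
     ((\<forall>s\<in>I. cov_deriv g (vel g) s = 0) \<longrightarrow>
        (\<exists>v w :: real^4. norm v = 1 \<and> norm w = 1 \<and> v \<bullet> w = 0 \<and> a \<in> span {v, w} \<and>
           (\<forall>s\<in>I. g s = cos s *\<^sub>R v + sin s *\<^sub>R w))) \<and>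
     (\<not> (\<forall>s\<in>I. cov_deriv g (vel g) s = 0) \<longrightarrow>
        (\<forall>s\<in>I. curv g s = \<bar>q\<bar> * sqrt ((norm a)\<^sup>2 - (a1\<^sup>2 + a2\<^sup>2)) \<and>
                tors g s = - q * (a1 * sin s - a2 * cos s)))"
proof -
  define T where "T = vel g"
  define Acc where "Acc t = vector_derivative (vel g) (at t)" for t
  define W where "W t = sphere_cross (g t) a (T t)" for t
  obtain s0 where s0: "s0 \<in> I" using I_ne by blast
  have dg: "(g has_vector_derivative T t) (at t)" if "t \<in> I" for t
    using smooth1 that vector_derivative_works[of g "at t"] by (simp add: T_def vel_def)
  have dT: "(T has_vector_derivative Acc t) (at t)" if "t \<in> I" for t
    using smooth2 that vector_derivative_works[of "vel g" "at t"] by (simp add: T_def Acc_def)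
  have gg: "g t \<bullet> g t = 1" if "t \<in> I" for t
    using on_sphere that by (simp add: norm_eq_1)
  have TT: "T t \<bullet> T t = 1" if "t \<in> I" for t
    using unit_speed that by (simp add: norm_eq_1 T_def)
  have gT: "g t \<bullet> T t = 0" if "t \<in> I" for t
  proof -
    have "g t \<bullet> T t + T t \<bullet> g t = 0"
      by (rule const_deriv[OF I_open that gg dinner[OF dg[OF that] dg[OF that]]])
    then show ?thesis by (simp add: inner_commute)
  qed
  have gA: "g t \<bullet> Acc t = -1" if "t \<in> I" for t
  proof -
    have "g t \<bullet> Acc t + T t \<bullet> T t = 0"
      by (rule const_deriv[OF I_open that gT dinner[OF dg[OF that] dT[OF that]]])
    then show ?thesis using TT[OF that] by simp
  qed
  have cov: "cov_deriv g (vel g) t = Acc t + g t" if "t \<in> I" for t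
    using gA[OF that] by (simp add: cov_deriv_def Acc_def inner_commute)
  have AccW: "Acc t = q *\<^sub>R W t - g t" if "t \<in> I" for t
    using conformal cov[OF that] that by (simp add: W_def T_def sc_confV algebra_simps)
  have Wa: "W t \<bullet> a = 0" for t
    unfolding W_def by (rule sc_u)
  define f where "f t = g t \<bullet> a" for t
  define f' where "f' t = T t \<bullet> a" for t
  have df: "(f has_real_derivative f' t) (at t)" if "t \<in> I" for t
    using dinner[OF dg[OF that], of "\<lambda>_. a" 0] unfolding f_def f'_def
    by (simp add: inner_commute)
  have df': "(f' has_real_derivative - f t) (at t)" if "t \<in> I" for t
  proof -
    have "(f' has_real_derivative (Acc t \<bullet> a)) (at t)"
      using dinner[OF dT[OF that], of "\<lambda>_. a" 0] unfolding f'_def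
      by (simp add: inner_commute)
    moreover have "Acc t \<bullet> a = - f t"
      using AccW[OF that] Wa[of t] by (simp add: f_def inner_diff_left)
    ultimately show ?thesis by simp
  qed
  define a1 where "a1 = f s0 * cos s0 - f' s0 * sin s0"
  define a2 where "a2 = f s0 * sin s0 + f' s0 * cos s0"
  have fsol: "\<forall>t\<in>I. f t = a1 * cos t + a2 * sin t \<and> f' t = - a1 * sin t + a2 * cos t"
    unfolding a1_def a2_def by (rule ode_cos_sin[OF I_int s0 df df'])

  have Wn: "W t \<bullet> W t = (norm a)\<^sup>2 - (a1\<^sup>2 + a2\<^sup>2)" if "t \<in> I" for t
  proof -
    have "W t \<bullet> W t = a \<bullet> a - (T t \<bullet> a)\<^sup>2 - (g t \<bullet> a)\<^sup>2"
      unfolding W_def gram using gg[OF that] TT[OF that] gT[OF that]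
      by (simp add: inner_commute power2_eq_square algebra_simps)
    also have "(T t \<bullet> a)\<^sup>2 + (g t \<bullet> a)\<^sup>2 = a1\<^sup>2 + a2\<^sup>2"
    proof -
      have "(T t \<bullet> a)\<^sup>2 + (g t \<bullet> a)\<^sup>2 = (a1 * cos t + a2 * sin t)\<^sup>2 + (- a1 * sin t + a2 * cos t)\<^sup>2"
        using fsol that by (simp add: f_def f'_def)
      also have "\<dots> = (a1\<^sup>2 + a2\<^sup>2) * ((sin t)\<^sup>2 + (cos t)\<^sup>2)"
        by algebra
      finally show ?thesis by (simp only: sin_cos_squared_add mult_1_right)
    qed
    then have "a \<bullet> a - (T t \<bullet> a)\<^sup>2 - (g t \<bullet> a)\<^sup>2 = (norm a)\<^sup>2 - (a1\<^sup>2 + a2\<^sup>2)"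
      by (simp add: power2_norm_eq_inner)
    finally show ?thesis .
  qed
  have covW: "cov_deriv g (vel g) t = q *\<^sub>R W t" if "t \<in> I" for t
    using cov[OF that] AccW[OF that] by simp
  have curvW: "curv g t = \<bar>q\<bar> * sqrt ((norm a)\<^sup>2 - (a1\<^sup>2 + a2\<^sup>2))" if "t \<in> I" for t
  proof -
    have "curv g t = \<bar>q\<bar> * norm (W t)" by (simp add: curv_def covW[OF that])
    also have "norm (W t) = sqrt (W t \<bullet> W t)" by (rule norm_eq_sqrt_inner)
    finally show ?thesis using Wn[OF that] by simp
  qed
  have geo: "(\<forall>s\<in>I. cov_deriv g (vel g) s = 0) \<longrightarrow>
        (\<exists>v w :: real^4. norm v = 1 \<and> norm w = 1 \<and> v \<bullet> w = 0 \<and> a \<in> span {v, w} \<and>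
           (\<forall>s\<in>I. g s = cos s *\<^sub>R v + sin s *\<^sub>R w))"
  proof
    assume geod: "\<forall>s\<in>I. cov_deriv g (vel g) s = 0"
    have Ag: "Acc t = - g t" if "t \<in> I" for t
      using geod cov[OF that] that by (simp add: eq_neg_iff_add_eq_0)
    define v where "v = cos s0 *\<^sub>R g s0 - sin s0 *\<^sub>R T s0"
    define w where "w = sin s0 *\<^sub>R g s0 + cos s0 *\<^sub>R T s0"
    have gsol: "g t = cos t *\<^sub>R v + sin t *\<^sub>R w" if t: "t \<in> I" for t
    proof -
      have "g t $ k = (cos t *\<^sub>R v + sin t *\<^sub>R w) $ k" for k
      proof -
        have d1: "((\<lambda>x. g x $ k) has_real_derivative T t $ k) (at t)" if "t \<in> I" for t
          by (rule comp_deriv[OF dg[OF that]])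
        have d2: "((\<lambda>x. T x $ k) has_real_derivative - (g t $ k)) (at t)" if "t \<in> I" for t
          using comp_deriv[OF dT[OF that], of k] Ag[OF that] by simp
        have "g t $ k = (g s0 $ k * cos s0 - T s0 $ k * sin s0) * cos t
             + (g s0 $ k * sin s0 + T s0 $ k * cos s0) * sin t"
          using ode_cos_sin[OF I_int s0 d1 d2] t by blast
        then show ?thesis by (simp add: v_def w_def algebra_simps)
      qed
      then show ?thesis by (simp add: vec_eq_iff)
    qed
    have c2: "cos s0 * cos s0 + sin s0 * sin s0 = 1"
      by (metis sin_cos_squared_add2 power2_eq_square)
    have g0: "g s0 \<bullet> g s0 = 1" and T0: "T s0 \<bullet> T s0 = 1" and gT0: "g s0 \<bullet> T s0 = 0"
      using gg gT TT s0 by auto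
    have vv: "v \<bullet> v = 1"
    proof -
      have "v \<bullet> v = cos s0 * cos s0 * (g s0 \<bullet> g s0) + sin s0 * sin s0 * (T s0 \<bullet> T s0)
          - 2 * cos s0 * sin s0 * (g s0 \<bullet> T s0)"
        unfolding v_def by (simp add: inner_diff_left inner_diff_right inner_commute algebra_simps)
      then show ?thesis using g0 T0 gT0 c2 by simp
    qed
    have ww: "w \<bullet> w = 1"
    proof -
      have "w \<bullet> w = sin s0 * sin s0 * (g s0 \<bullet> g s0) + cos s0 * cos s0 * (T s0 \<bullet> T s0)
          + 2 * cos s0 * sin s0 * (g s0 \<bullet> T s0)"
        unfolding w_def by (simp add: inner_add_left inner_add_right inner_commute algebra_simps)
      then show ?thesis using g0 T0 gT0 c2 by (simp add: algebra_simps)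
    qed
    have vw: "v \<bullet> w = 0"
    proof -
      have "v \<bullet> w = cos s0 * sin s0 * (g s0 \<bullet> g s0) - sin s0 * cos s0 * (T s0 \<bullet> T s0)
          + (cos s0 * cos s0 - sin s0 * sin s0) * (g s0 \<bullet> T s0)"
        unfolding v_def w_def by (simp add: inner_add_left inner_add_right inner_diff_left
            inner_diff_right inner_commute algebra_simps)
      then show ?thesis using g0 T0 gT0 by simp
    qed
    have W0: "W s0 = 0"
      using covW[OF s0] geod s0 q_nz by simp
    define f0 where "f0 = g s0 \<bullet> a"
    define b where "b = T s0 \<bullet> a"
    define D where "D = a - f0 *\<^sub>R g s0 - b *\<^sub>R T s0"
    have "D \<bullet> D = W s0 \<bullet> W s0"
    proof -
      have "D \<bullet> D = a \<bullet> a - f0 * f0 - b * b"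
        unfolding D_def using g0 T0 gT0
        by (simp add: inner_add_left inner_add_right inner_diff_left inner_diff_right
            inner_commute algebra_simps f0_def b_def)
      moreover have "W s0 \<bullet> W s0 = a \<bullet> a - f0 * f0 - b * b"
        unfolding W_def gram using g0 T0 gT0
        by (simp add: inner_commute algebra_simps f0_def b_def)
      ultimately show ?thesis by simp
    qed
    then have "D = 0" using W0 by simp
    then have aeq: "a = f0 *\<^sub>R g s0 + b *\<^sub>R T s0" unfolding D_def by (simp add: algebra_simps)
    have "a = (f0 * cos s0 - b * sin s0) *\<^sub>R v + (f0 * sin s0 + b * cos s0) *\<^sub>R w"
    proof (rule vec_eq_iff[THEN iffD2], rule allI)
      fix i
      have ai: "a $ i = f0 * g s0 $ i + b * T s0 $ i"
        using arg_cong[OF aeq, of "\<lambda>x. x $ i"] by simp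
      show "a $ i = ((f0 * cos s0 - b * sin s0) *\<^sub>R v + (f0 * sin s0 + b * cos s0) *\<^sub>R w) $ i"
        unfolding v_def w_def vector_add_component vector_minus_component vector_scaleR_component ai real_scaleR_def
        using c2 by algebra
    qed
    moreover have "(f0 * cos s0 - b * sin s0) *\<^sub>R v + (f0 * sin s0 + b * cos s0) *\<^sub>R w \<in> span {v, w}"
      by (rule span_add; rule span_mul; rule span_base; simp)
    ultimately have "a \<in> span {v, w}" by simp
    then show "\<exists>v w :: real^4. norm v = 1 \<and> norm w = 1 \<and> v \<bullet> w = 0 \<and> a \<in> span {v, w} \<and>
           (\<forall>s\<in>I. g s = cos s *\<^sub>R v + sin s *\<^sub>R w)"
      using vv ww vw gsol by (auto simp: norm_eq_1)
  qed

  have ng: "\<not> (\<forall>s\<in>I. cov_deriv g (vel g) s = 0) \<longrightarrow>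
        (\<forall>s\<in>I. curv g s = \<bar>q\<bar> * sqrt ((norm a)\<^sup>2 - (a1\<^sup>2 + a2\<^sup>2)) \<and>
                tors g s = - q * (a1 * sin s - a2 * cos s))"
  proof (intro impI ballI conjI)
    assume "\<not> (\<forall>s\<in>I. cov_deriv g (vel g) s = 0)"
    then obtain s1 where s1: "s1 \<in> I" "cov_deriv g (vel g) s1 \<noteq> 0" by blast
    define K2 where "K2 = (norm a)\<^sup>2 - (a1\<^sup>2 + a2\<^sup>2)"
    have "W s1 \<noteq> 0" using s1 covW by auto
    then have "W s1 \<bullet> W s1 > 0" by simp
    then have K2pos: "K2 > 0" using Wn[OF s1(1)] K2_def by simp
    define \<kappa> where "\<kappa> = \<bar>q\<bar> * sqrt K2"
    have kpos: "\<kappa> > 0" using K2pos q_nz \<kappa>_def by simp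
    define c where "c = q / \<kappa>"
    fix t assume t: "t \<in> I"
    show "curv g t = \<bar>q\<bar> * sqrt ((norm a)\<^sup>2 - (a1\<^sup>2 + a2\<^sup>2))" by (rule curvW[OF t])
    have Nform: "frenetN g x = c *\<^sub>R W x" if "x \<in> I" for x
      unfolding frenetN_def curvW[OF that] covW[OF that] c_def \<kappa>_def K2_def by simp
    have dW: "(W has_vector_derivative (q *\<^sub>R sphere_cross (g t) a (W t))) (at t)"
    proof -
      have "((\<lambda>x. sphere_cross (g x) a (T x)) has_vector_derivative
          (sphere_cross (g t) a (Acc t) + sphere_cross (T t) a (T t))) (at t)"
        by (rule bounded_bilinear.has_vector_derivative[OF sc_bilinear dg[OF t] dT[OF t]])
      moreover have "sphere_cross (g t) a (Acc t) + sphere_cross (T t) a (T t)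
          = q *\<^sub>R sphere_cross (g t) a (W t)"
        using AccW[OF t] by (simp add: sc_pp sc_diff_v)
      ultimately show ?thesis by (simp add: W_def[abs_def])
    qed
    have dN0: "((\<lambda>x. c *\<^sub>R W x) has_vector_derivative (c * q) *\<^sub>R sphere_cross (g t) a (W t)) (at t)"
      using has_vector_derivative_scaleR[OF DERIV_const dW, of c] by simp
    have dN: "(frenetN g has_vector_derivative (c * q) *\<^sub>R sphere_cross (g t) a (W t)) (at t)"
      by (rule has_vector_derivative_transform_within_open[OF dN0 I_open t]) (simp add: Nform)
    define N' where "N' = (c * q) *\<^sub>R sphere_cross (g t) a (W t)"
    have vdN: "vector_derivative (frenetN g) (at t) = N'"
      unfolding N'_def by (rule vector_derivative_at[OF dN])
    have B: "frenetB g t = c *\<^sub>R sphere_cross (g t) (T t) (W t)"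
      unfolding frenetB_def Nform[OF t] by (simp add: T_def sc_scale_v)
    have gB: "g t \<bullet> frenetB g t = 0"
      unfolding B using sc_p by (simp add: inner_commute)
    have Wg: "W t \<bullet> g t = 0" unfolding W_def by (rule sc_p)
    have WT: "W t \<bullet> T t = 0" unfolding W_def by (rule sc_v)
    have "tors g t = N' \<bullet> frenetB g t"
      unfolding tors_def cov_deriv_def vdN using gB by (simp add: inner_diff_left)
    also have "\<dots> = c * c * q * (sphere_cross (g t) a (W t) \<bullet> sphere_cross (g t) (T t) (W t))"
      unfolding N'_def B by simp
    also have "sphere_cross (g t) a (W t) \<bullet> sphere_cross (g t) (T t) (W t) = (a \<bullet> T t) * (W t \<bullet> W t)"
      unfolding gram using gg[OF t] gT[OF t] Wg WT
      by (simp add: inner_commute algebra_simps)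
    also have "W t \<bullet> W t = K2" using Wn[OF t] K2_def by simp
    also have "c * c * q * ((a \<bullet> T t) * K2) = q * (a \<bullet> T t)"
    proof -
      have "c * c * K2 = 1"
      proof -
        have s2: "(sqrt K2)\<^sup>2 = K2" using K2pos by simp
        have "(q / (\<bar>q\<bar> * sqrt K2))\<^sup>2 * K2 = q\<^sup>2 / (q\<^sup>2 * K2) * K2"
          by (simp add: power_divide power_mult_distrib s2)
        also have "\<dots> = 1" using K2pos q_nz by simp
        finally show ?thesis by (simp only: power2_eq_square c_def \<kappa>_def)
      qed
      then show ?thesis by (simp add: algebra_simps)
    qed
    also have "a \<bullet> T t = - a1 * sin t + a2 * cos t"
      using fsol t by (simp add: f'_def inner_commute)
    finally show "tors g t = - q * (a1 * sin t - a2 * cos t)" by (simp add: algebra_simps)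
  qed
  show ?thesis
    using fsol geo ng by (auto simp: f_def)
qed
end
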